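(* Let $B\colon\mathbf{Set}\to\mathbf{Set}$ be a functor, $\Lambda$ a finite set, and $(\tau_\lambda\colon B[0,1]\to[0,1])_{\lambda\in\Lambda}$ functions such that, for every set $Y$, whenever a sequence of functions $k_i\colon Y\to[0,1]$ converges uniformly to $l$, the sequence $\tau_\lambda\circ Bk_i$ converges uniformly to $\tau_\lambda\circ Bl$ for each $\lambda$. Let $X$ be a set and $S\subseteq\mathbf{Set}(X,[0,1])$ such that (i) $S$ contains the constant function $1$ and is closed under $k\mapsto1-k$, pointwise $\min(k,l)$, and $k\mapsto\max(k-q,0)$ for every $q\in\mathbb{Q}\cap[0,1]$; (ii) the pseudometric space $(X,d_S)$ with $d_S(x,y)=\sup_{k\in S}|k(x)-k(y)|$ is totally bounded. Then $S$ is approximating: for every nonexpansive map $h\colon(X,d_S)\to([0,1],d_e)$, every $\lambda\in\Lambda$ and all $z,w\in BX$, $\sup_{k\in S,\lambda'\in\Lambda}|\tau_{\lambda'}(Bk(z))-\tau_{\lambda'}(Bk(w))|\ge|\tau_\lambda(Bh(z))-\tau_\lambda(Bh(w))|$.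
   Context: $d_e$ is the Euclidean metric on $[0,1]$. A pseudometric space $(X,d)$ is totally bounded if for every $\varepsilon>0$ there is a finite $F\subseteq X$ such that every $x\in X$ has some $y\in F$ with $d(x,y)<\varepsilon$. *)

theory Defs
  imports "HOL-Analysis.Analysis"
begin

definition dS :: "('x \<Rightarrow> real) set \<Rightarrow> 'x \<Rightarrow> 'x \<Rightarrow> real" where
  "dS S x y = (SUP k\<in>S. \<bar>k x - k y\<bar>)"

definition totally_bounded_pm :: "'x set \<Rightarrow> ('x \<Rightarrow> 'x \<Rightarrow> real) \<Rightarrow> bool" where
  "totally_bounded_pm X d \<longleftrightarrow>
     (\<forall>e>0. \<exists>F. finite F \<and> F \<subseteq> X \<and> (\<forall>x\<in>X. \<exists>y\<in>F. d x y < e))"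

definition nonexpansive_pm :: "'x set \<Rightarrow> ('x \<Rightarrow> 'x \<Rightarrow> real) \<Rightarrow> ('x \<Rightarrow> real) \<Rightarrow> bool" where
  "nonexpansive_pm X d h \<longleftrightarrow> (\<forall>x\<in>X. \<forall>y\<in>X. \<bar>h x - h y\<bar> \<le> d x y)"

end

theory Submission
  imports Defs
begin

locale Sfam =
  fixes X :: "'x set" and S :: "('x \<Rightarrow> real) set"
  assumes S_sub: "S \<subseteq> X \<rightarrow>\<^sub>E {0..1}"
    and S_one: "restrict (\<lambda>x. 1) X \<in> S"
    and S_compl: "\<And>k. k \<in> S \<Longrightarrow> restrict (\<lambda>x. 1 - k x) X \<in> S"
    and S_min: "\<And>k l. k \<in> S \<Longrightarrow> l \<in> S \<Longrightarrow> restrict (\<lambda>x. min (k x) (l x)) X \<in> S"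
    and S_trunc: "\<And>k q. k \<in> S \<Longrightarrow> q \<in> \<rat> \<Longrightarrow> 0 \<le> q \<Longrightarrow> q \<le> 1 \<Longrightarrow>
        restrict (\<lambda>x. max (k x - q) 0) X \<in> S"
begin

lemma mem01: "k \<in> S \<Longrightarrow> x \<in> X \<Longrightarrow> 0 \<le> k x \<and> k x \<le> 1"
proof -
  assume "k \<in> S" "x \<in> X"
  then have "k x \<in> {0..1}" using S_sub by (intro PiE_mem[of k X]) auto
  then show ?thesis by simp
qed

lemma restr: "k \<in> S \<Longrightarrow> restrict k X = k"
  using S_sub by (metis extensional_restrict PiE_iff subsetD)

lemma S_nonempty: "S \<noteq> {}" using S_one by blast

lemma S_const: assumes "q \<in> \<rat>" "0 \<le> q" "q \<le> 1" shows "restrict (\<lambda>x. q) X \<in> S"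
proof -
  have "1 - q \<in> \<rat>" using assms by auto
  from S_trunc[OF S_one this] assms have "restrict (\<lambda>x. max (restrict (\<lambda>x. 1) X x - (1 - q)) 0) X \<in> S" by auto
  also have "restrict (\<lambda>x. max (restrict (\<lambda>x. 1) X x - (1 - q)) 0) X = restrict (\<lambda>x. q) X"
    using assms by (auto simp: fun_eq_iff)
  finally show ?thesis .
qed

lemma S_max: assumes "k \<in> S" "l \<in> S" shows "restrict (\<lambda>x. max (k x) (l x)) X \<in> S"
proof -
  have "restrict (\<lambda>x. 1 - restrict (\<lambda>x. min (restrict (\<lambda>x. 1 - k x) X x) (restrict (\<lambda>x. 1 - l x) X x)) X x) X \<in> S"
    using assms by (intro S_compl S_min) auto
  also have "restrict (\<lambda>x. 1 - restrict (\<lambda>x. min (restrict (\<lambda>x. 1 - k x) X x) (restrict (\<lambda>x. 1 - l x) X x)) X x) X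
     = restrict (\<lambda>x. max (k x) (l x)) X"
    by (auto simp: fun_eq_iff min_def max_def)
  finally show ?thesis .
qed

lemma S_up: assumes "k \<in> S" "q \<in> \<rat>" "0 \<le> q" "q \<le> 1" shows "restrict (\<lambda>x. min (k x + q) 1) X \<in> S"
proof -
  have "restrict (\<lambda>x. 1 - restrict (\<lambda>x. max (restrict (\<lambda>x. 1 - k x) X x - q) 0) X x) X \<in> S"
    using assms by (intro S_compl S_trunc) auto
  also have "restrict (\<lambda>x. 1 - restrict (\<lambda>x. max (restrict (\<lambda>x. 1 - k x) X x - q) 0) X x) X
     = restrict (\<lambda>x. min (k x + q) 1) X"
    by (auto simp: fun_eq_iff min_def max_def)
  finally show ?thesis .
qed

lemma S_shift: assumes "k \<in> S" "r \<in> \<rat>" "\<bar>r\<bar> \<le> 1"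
  shows "restrict (\<lambda>x. max 0 (min 1 (k x + r))) X \<in> S"
proof (cases "r \<ge> 0")
  case True
  have "restrict (\<lambda>x. min (k x + r) 1) X \<in> S" using S_up assms True by auto
  also have "restrict (\<lambda>x. min (k x + r) 1) X = restrict (\<lambda>x. max 0 (min 1 (k x + r))) X"
  proof (intro restrict_ext)
    fix x assume "x \<in> X"
    then have "0 \<le> k x" "k x \<le> 1" using mem01 assms by auto
    then show "min (k x + r) 1 = max 0 (min 1 (k x + r))" using True by (auto simp: min_def max_def)
  qed
  finally show ?thesis .
next
  case False
  have "restrict (\<lambda>x. max (k x - (-r)) 0) X \<in> S" using S_trunc[of k "-r"] assms False by auto
  also have "restrict (\<lambda>x. max (k x - (-r)) 0) X = restrict (\<lambda>x. max 0 (min 1 (k x + r))) X"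
  proof (intro restrict_ext)
    fix x assume "x \<in> X"
    then have "0 \<le> k x" "k x \<le> 1" using mem01 assms by auto
    then show "max (k x - (-r)) 0 = max 0 (min 1 (k x + r))" using False by (auto simp: min_def max_def)
  qed
  finally show ?thesis .
qed

lemma S_Min: assumes "finite F" "F \<noteq> {}" "\<And>y. y \<in> F \<Longrightarrow> g y \<in> S"
  shows "restrict (\<lambda>x. Min ((\<lambda>y. g y x) ` F)) X \<in> S"
  using assms
proof (induction F rule: finite_ne_induct)
  case (singleton y)
  then show ?case using restr by simp
next
  case (insert a F)
  have "restrict (\<lambda>x. min (g a x) (restrict (\<lambda>x. Min ((\<lambda>y. g y x) ` F)) X x)) X \<in> S"
    using insert by (intro S_min) auto
  also have "restrict (\<lambda>x. min (g a x) (restrict (\<lambda>x. Min ((\<lambda>y. g y x) ` F)) X x)) X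
    = restrict (\<lambda>x. Min ((\<lambda>y. g y x) ` insert a F)) X"
    using insert by (auto simp: fun_eq_iff)
  finally show ?case .
qed

lemma S_Max: assumes "finite F" "F \<noteq> {}" "\<And>y. y \<in> F \<Longrightarrow> g y \<in> S"
  shows "restrict (\<lambda>x. Max ((\<lambda>y. g y x) ` F)) X \<in> S"
  using assms
proof (induction F rule: finite_ne_induct)
  case (singleton y)
  then show ?case using restr by simp
next
  case (insert a F)
  have "restrict (\<lambda>x. max (g a x) (restrict (\<lambda>x. Max ((\<lambda>y. g y x) ` F)) X x)) X \<in> S"
    using insert by (intro S_max) auto
  also have "restrict (\<lambda>x. max (g a x) (restrict (\<lambda>x. Max ((\<lambda>y. g y x) ` F)) X x)) X
    = restrict (\<lambda>x. Max ((\<lambda>y. g y x) ` insert a F)) X"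
    using insert by (auto simp: fun_eq_iff)
  finally show ?case .
qed

lemma bdd: assumes "x \<in> X" "y \<in> X" shows "bdd_above ((\<lambda>k. \<bar>k x - k y\<bar>) ` S)"
proof (rule bdd_aboveI2)
  fix k assume "k \<in> S"
  then show "\<bar>k x - k y\<bar> \<le> 1" using mem01[of k x] mem01[of k y] assms by auto
qed

lemma nonexp: "k \<in> S \<Longrightarrow> x \<in> X \<Longrightarrow> y \<in> X \<Longrightarrow> \<bar>k x - k y\<bar> \<le> dS S x y"
  unfolding dS_def by (rule cSUP_upper[OF _ bdd]) auto

lemma dS_sym: "dS S x y = dS S y x"
  unfolding dS_def by (simp add: abs_minus_commute)

lemma attain: assumes "x \<in> X" "y \<in> X" "e > 0" shows "\<exists>k\<in>S. \<bar>k x - k y\<bar> > dS S x y - e"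
proof -
  have "dS S x y - e < (SUP k\<in>S. \<bar>k x - k y\<bar>)" using assms unfolding dS_def by simp
  then show ?thesis by (simp add: less_cSUP_iff[OF S_nonempty bdd[OF assms(1,2)]])
qed


lemma rat_approx: fixes e t a b :: real assumes "e > 0" "a \<le> t" "t \<le> b" "a \<in> \<rat>" "b \<in> \<rat>"
  shows "\<exists>r\<in>\<rat>. a \<le> r \<and> r \<le> b \<and> \<bar>r - t\<bar> < e"
proof -
  obtain r0 where r0: "r0 \<in> \<rat>" "t - e < r0" "r0 < t + e" using Rats_dense_in_real[of "t - e" "t + e"] assms by auto
  define r where "r = max a (min b r0)"
  have "r \<in> \<rat>" unfolding r_def using r0 assms by (auto simp: max_def min_def)
  moreover have "a \<le> r \<and> r \<le> b \<and> \<bar>r - t\<bar> < e" unfolding r_def using r0 assms by (auto simp: max_def min_def)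
  ultimately show ?thesis by blast
qed

lemma two_point_le:
  assumes ne: "nonexpansive_pm X (dS S) h" and hX: "h \<in> X \<rightarrow>\<^sub>E {0..1}"
    and xy: "x \<in> X" "y \<in> X" and hle: "h y \<le> h x" and e: "e > 0"
  shows "\<exists>g\<in>S. \<bar>g x - h x\<bar> \<le> 2*e \<and> \<bar>g y - h y\<bar> \<le> 2*e"
proof -
  have hx: "0 \<le> h x" "h x \<le> 1" "0 \<le> h y" "h y \<le> 1" using hX xy by (auto simp: PiE_iff)
  have d: "h x - h y \<le> dS S x y" using ne xy unfolding nonexpansive_pm_def by force
  obtain k where k: "k \<in> S" "\<bar>k x - k y\<bar> > dS S x y - e" using attain[OF xy e] by blast
  obtain k' where k': "k' \<in> S" "k' x - k' y > h x - h y - e"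
  proof (cases "k y \<le> k x")
    case True then show ?thesis using that[of k] k d by auto
  next
    case False
    have "restrict (\<lambda>t. 1 - k t) X \<in> S" using S_compl k by auto
    then show ?thesis using that[of "restrict (\<lambda>t. 1 - k t) X"] k d False xy by auto
  qed
  have k'01: "0 \<le> k' x" "k' x \<le> 1" "0 \<le> k' y" "k' y \<le> 1" using mem01 k' xy by auto
  obtain r where r: "r \<in> \<rat>" "-1 \<le> r" "r \<le> 1" "\<bar>r - (h y - k' y)\<bar> < e"
    using rat_approx[OF e, of "-1" "h y - k' y" 1] hx k'01 by auto
  obtain c where c: "c \<in> \<rat>" "0 \<le> c" "c \<le> 1" "\<bar>c - h x\<bar> < e"
    using rat_approx[OF e, of 0 "h x" 1] hx by auto
  define g where "g = restrict (\<lambda>t. min (restrict (\<lambda>t. c) X t) (restrict (\<lambda>t. max 0 (min 1 (k' t + r))) X t)) X"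
  have sh: "restrict (\<lambda>t. max 0 (min 1 (k' t + r))) X \<in> S" using S_shift[OF k'(1) r(1)] r by auto
  have "g \<in> S" unfolding g_def by (rule S_min[OF S_const[OF c(1-3)] sh])
  moreover have "g x = min c (max 0 (min 1 (k' x + r)))" "g y = min c (max 0 (min 1 (k' y + r)))"
    unfolding g_def using xy by auto
  moreover have "\<bar>min c (max 0 (min 1 (k' x + r))) - h x\<bar> \<le> 2*e"
    using c r k' k'01 hx hle e unfolding min_def max_def abs_if by (smt (verit))
  moreover have "\<bar>min c (max 0 (min 1 (k' y + r))) - h y\<bar> \<le> 2*e"
    using c r k' k'01 hx hle e unfolding min_def max_def abs_if by (smt (verit))
  ultimately show ?thesis by metis
qed

lemma two_point:
  assumes ne: "nonexpansive_pm X (dS S) h" and hX: "h \<in> X \<rightarrow>\<^sub>E {0..1}"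
    and xy: "x \<in> X" "y \<in> X" and e: "e > 0"
  shows "\<exists>g\<in>S. \<bar>g x - h x\<bar> \<le> e \<and> \<bar>g y - h y\<bar> \<le> e"
proof -
  have e2: "e/2 > 0" using e by simp
  show ?thesis
  proof (cases "h y \<le> h x")
    case True then show ?thesis using two_point_le[OF ne hX xy True e2] by auto
  next
    case False then show ?thesis using two_point_le[OF ne hX xy(2,1) _ e2] by fastforce
  qed
qed


lemma approx:
  assumes ne: "nonexpansive_pm X (dS S) h" and hX: "h \<in> X \<rightarrow>\<^sub>E {0..1}"
    and tb: "totally_bounded_pm X (dS S)" and e: "e > 0"
  shows "\<exists>g\<in>S. \<forall>x\<in>X. \<bar>g x - h x\<bar> \<le> e"
proof (cases "X = {}")
  case True then show ?thesis using S_one by auto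
next
  case False
  define \<eta> where "\<eta> = e/3"
  have \<eta>: "\<eta> > 0" using e unfolding \<eta>_def by simp
  have "\<exists>F. finite F \<and> F \<subseteq> X \<and> (\<forall>x\<in>X. \<exists>y\<in>F. dS S x y < \<eta>)"
    using tb \<eta> unfolding totally_bounded_pm_def by simp
  then obtain F where F: "finite F" "F \<subseteq> X" "\<forall>x\<in>X. \<exists>y\<in>F. dS S x y < \<eta>"
    by (elim exE conjE) simp
  obtain x0 where "x0 \<in> X" using False by blast
  then obtain y0 where "y0 \<in> F" using F(3) by blast
  then have Fne: "F \<noteq> {}" by blast
  have hne: "\<And>a b. a \<in> X \<Longrightarrow> b \<in> X \<Longrightarrow> \<bar>h a - h b\<bar> \<le> dS S a b"
    using ne by (simp add: nonexpansive_pm_def)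
  have tp: "\<forall>x\<in>X. \<exists>f. \<forall>y\<in>X. f y \<in> S \<and> \<bar>f y x - h x\<bar> \<le> \<eta> \<and> \<bar>f y y - h y\<bar> \<le> \<eta>"
  proof
    fix x assume x: "x \<in> X"
    show "\<exists>f. \<forall>y\<in>X. f y \<in> S \<and> \<bar>f y x - h x\<bar> \<le> \<eta> \<and> \<bar>f y y - h y\<bar> \<le> \<eta>"
      by (rule bchoice) (use two_point[OF ne hX x _ \<eta>] in blast)
  qed
  obtain G where G: "\<forall>x\<in>X. \<forall>y\<in>X. G x y \<in> S \<and> \<bar>G x y x - h x\<bar> \<le> \<eta> \<and> \<bar>G x y y - h y\<bar> \<le> \<eta>"
    using bchoice[OF tp] by blast
  define M where "M x = restrict (\<lambda>z. Min ((\<lambda>y. G x y z) ` F)) X" for x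
  have MS: "M x \<in> S" if "x \<in> X" for x
    unfolding M_def by (rule S_Min[OF F(1) Fne]) (use G F(2) that in blast)
  have Mup: "M x z < h z + 3*\<eta>" if x: "x \<in> X" and z: "z \<in> X" for x z
  proof -
    obtain y where y: "y \<in> F" "dS S z y < \<eta>" using F(3) z by blast
    have yX: "y \<in> X" using y F(2) by blast
    have "M x z \<le> G x y z" unfolding M_def using z y F(1) by auto
    also have "G x y z \<le> G x y y + dS S z y" using nonexp[of "G x y" z y] G x yX z by force
    also have "G x y y \<le> h y + \<eta>" using G x yX by force
    also have "h y \<le> h z + dS S z y" using hne[OF yX z] dS_sym[of y z] by linarith
    finally show ?thesis using y by linarith
  qed
  have Mlow: "M x x \<ge> h x - \<eta>" if x: "x \<in> X" for x
  proof -
    have *: "h x - \<eta> \<le> G x y x" if y: "y \<in> F" for y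
    proof -
      have yX: "y \<in> X" using y F(2) by blast
      have "\<bar>G x y x - h x\<bar> \<le> \<eta>" using G x yX by blast
      then show ?thesis by linarith
    qed
    show ?thesis unfolding M_def using x F(1) Fne * by (simp add: Min_ge_iff)
  qed
  define H where "H = restrict (\<lambda>z. Max ((\<lambda>x. M x z) ` F)) X"
  have HS: "H \<in> S" unfolding H_def by (rule S_Max[OF F(1) Fne]) (use MS F(2) in blast)
  have "\<bar>H z - h z\<bar> \<le> e" if z: "z \<in> X" for z
  proof -
    have "H z \<le> h z + 3*\<eta>" unfolding H_def using z F Fne Mup by (force simp: Max_le_iff)
    moreover have "H z \<ge> h z - 3*\<eta>"
    proof -
      obtain x where x: "x \<in> F" "dS S z x < \<eta>" using F(3) z by blast
      have xX: "x \<in> X" using x F(2) by blast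
      have "h z - 3*\<eta> \<le> h x - \<eta> - dS S z x" using hne[OF xX z] dS_sym[of x z] x by linarith
      also have "\<dots> \<le> M x x - dS S z x" using Mlow[OF xX] by linarith
      also have "\<dots> \<le> M x z" using nonexp[OF MS[OF xX] z xX] by linarith
      also have "M x z \<le> H z" unfolding H_def using z x F(1) by auto
      finally show ?thesis .
    qed
    ultimately show ?thesis unfolding \<eta>_def by linarith
  qed
  then show ?thesis using HS by blast
qed

end

theorem propositionV6:
  fixes Bob :: "'x set \<Rightarrow> 'bx set"
    and BI :: "'bi set"
    and Bmap :: "'x set \<Rightarrow> ('x \<Rightarrow> real) \<Rightarrow> 'bx \<Rightarrow> 'bi"
    and \<Lambda> :: "'l set"
    and \<tau> :: "'l \<Rightarrow> 'bi \<Rightarrow> real"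
    and X :: "'x set"
    and S :: "('x \<Rightarrow> real) set"
  assumes Bmap_type: "\<And>Y k. k \<in> Y \<rightarrow>\<^sub>E {0..1} \<Longrightarrow> Bmap Y k \<in> Bob Y \<rightarrow> BI"
    and fin: "finite \<Lambda>"
    and tau_type: "\<And>l. l \<in> \<Lambda> \<Longrightarrow> \<tau> l \<in> BI \<rightarrow> {0..1}"
    and tau_cont: "\<And>Y k l lam. (\<And>i. k i \<in> Y \<rightarrow>\<^sub>E {0..1}) \<Longrightarrow> l \<in> Y \<rightarrow>\<^sub>E {0..1} \<Longrightarrow>
        uniform_limit Y k l sequentially \<Longrightarrow> lam \<in> \<Lambda> \<Longrightarrow>
        uniform_limit (Bob Y) (\<lambda>i z. \<tau> lam (Bmap Y (k i) z)) (\<lambda>z. \<tau> lam (Bmap Y l z)) sequentially"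
    and S_sub: "S \<subseteq> X \<rightarrow>\<^sub>E {0..1}"
    and S_one: "restrict (\<lambda>x. 1) X \<in> S"
    and S_compl: "\<And>k. k \<in> S \<Longrightarrow> restrict (\<lambda>x. 1 - k x) X \<in> S"
    and S_min: "\<And>k l. k \<in> S \<Longrightarrow> l \<in> S \<Longrightarrow> restrict (\<lambda>x. min (k x) (l x)) X \<in> S"
    and S_trunc: "\<And>k q. k \<in> S \<Longrightarrow> q \<in> \<rat> \<Longrightarrow> 0 \<le> q \<Longrightarrow> q \<le> 1 \<Longrightarrow>
        restrict (\<lambda>x. max (k x - q) 0) X \<in> S"
    and tb: "totally_bounded_pm X (dS S)"
  shows "\<forall>h \<in> X \<rightarrow>\<^sub>E {0..1}. nonexpansive_pm X (dS S) h \<longrightarrow>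
          (\<forall>lam\<in>\<Lambda>. \<forall>z\<in>Bob X. \<forall>w\<in>Bob X.
             (SUP p\<in>S \<times> \<Lambda>. \<bar>\<tau> (snd p) (Bmap X (fst p) z) - \<tau> (snd p) (Bmap X (fst p) w)\<bar>)
               \<ge> \<bar>\<tau> lam (Bmap X h z) - \<tau> lam (Bmap X h w)\<bar>)"
  proof (intro ballI impI)
  fix h lam z w
  assume hX: "h \<in> X \<rightarrow>\<^sub>E {0..1}" and ne: "nonexpansive_pm X (dS S) h"
    and lam: "lam \<in> \<Lambda>" and z: "z \<in> Bob X" and w: "w \<in> Bob X"
  interpret Sfam X S by unfold_locales (fact S_sub S_one S_compl S_min S_trunc)+
  have "\<forall>n. \<exists>g\<in>S. \<forall>x\<in>X. \<bar>g x - h x\<bar> \<le> 1 / real (Suc n)"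
    using approx[OF ne hX tb] by simp
  then obtain g where g: "\<And>n. g n \<in> S" "\<And>n x. x \<in> X \<Longrightarrow> \<bar>g n x - h x\<bar> \<le> 1 / real (Suc n)"
    by metis
  have ul: "uniform_limit X g h sequentially"
  proof (rule uniform_limitI)
    fix e :: real assume e: "e > 0"
    obtain N where N: "inverse (real (Suc N)) < e" using reals_Archimedean[OF e] by blast
    have "\<forall>n\<ge>N. \<forall>x\<in>X. dist (g n x) (h x) < e"
    proof (intro allI impI ballI)
      fix n x assume n: "n \<ge> N" and x: "x \<in> X"
      have "1 / real (Suc n) \<le> 1 / real (Suc N)" using n by (simp add: frac_le)
      then show "dist (g n x) (h x) < e" using g(2)[OF x, of n] N by (simp add: dist_real_def inverse_eq_divide)
    qed
    then show "\<forall>\<^sub>F n in sequentially. \<forall>x\<in>X. dist (g n x) (h x) < e"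
      unfolding eventually_sequentially by blast
  qed
  have gE: "\<And>i. g i \<in> X \<rightarrow>\<^sub>E {0..1}" using g(1) S_sub by blast
  have UL: "uniform_limit (Bob X) (\<lambda>i z. \<tau> lam (Bmap X (g i) z)) (\<lambda>z. \<tau> lam (Bmap X h z)) sequentially"
    by (rule tau_cont[OF gE hX ul lam])
  have tz: "(\<lambda>i. \<tau> lam (Bmap X (g i) z)) \<longlonglongrightarrow> \<tau> lam (Bmap X h z)"
    using tendsto_uniform_limitI[OF UL z] .
  have tw: "(\<lambda>i. \<tau> lam (Bmap X (g i) w)) \<longlonglongrightarrow> \<tau> lam (Bmap X h w)"
    using tendsto_uniform_limitI[OF UL w] .
  have lim: "(\<lambda>i. \<bar>\<tau> lam (Bmap X (g i) z) - \<tau> lam (Bmap X (g i) w)\<bar>) \<longlonglongrightarrow> \<bar>\<tau> lam (Bmap X h z) - \<tau> lam (Bmap X h w)\<bar>"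
    by (intro tendsto_intros tz tw)
  have bd: "bdd_above ((\<lambda>p. \<bar>\<tau> (snd p) (Bmap X (fst p) z) - \<tau> (snd p) (Bmap X (fst p) w)\<bar>) ` (S \<times> \<Lambda>))"
  proof (rule bdd_aboveI2)
    fix p assume p: "p \<in> S \<times> \<Lambda>"
    have "fst p \<in> S" using p by (simp add: mem_Times_iff)
    then have "fst p \<in> X \<rightarrow>\<^sub>E {0..1}" using S_sub by (rule rev_subsetD)
    then have B: "Bmap X (fst p) \<in> Bob X \<rightarrow> BI" by (rule Bmap_type)
    have "snd p \<in> \<Lambda>" using p by (simp add: mem_Times_iff)
    then have T: "\<tau> (snd p) \<in> BI \<rightarrow> {0..1}" by (rule tau_type)
    have "\<tau> (snd p) (Bmap X (fst p) z) \<in> {0..1}" using B T z by blast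
    moreover have "\<tau> (snd p) (Bmap X (fst p) w) \<in> {0..1}" using B T w by blast
    ultimately show "\<bar>\<tau> (snd p) (Bmap X (fst p) z) - \<tau> (snd p) (Bmap X (fst p) w)\<bar> \<le> 1" by auto
  qed
  have le: "\<bar>\<tau> lam (Bmap X (g i) z) - \<tau> lam (Bmap X (g i) w)\<bar>
      \<le> (SUP p\<in>S \<times> \<Lambda>. \<bar>\<tau> (snd p) (Bmap X (fst p) z) - \<tau> (snd p) (Bmap X (fst p) w)\<bar>)" for i
    using cSUP_upper[OF _ bd, of "(g i, lam)"] g(1) lam by simp
  show "(SUP p\<in>S \<times> \<Lambda>. \<bar>\<tau> (snd p) (Bmap X (fst p) z) - \<tau> (snd p) (Bmap X (fst p) w)\<bar>)
      \<ge> \<bar>\<tau> lam (Bmap X h z) - \<tau> lam (Bmap X h w)\<bar>"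
    by (rule LIMSEQ_le_const2[OF lim]) (use le in blast)
qed

end
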